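(* Let $f:\mathbb{R}\to\mathbb{R}$ be a Lipschitz continuous, 1-periodic function which is exactly 1-periodic, in the sense that $f(\cdot-\theta)\neq f(\cdot-\theta^* )$ on a set of positive Lebesgue measure whenever $\theta\neq\theta^*\bmod 1$. Let $Z_1,\dots,Z_n$ be iid with an even density $\phi$ and distribution function $\Phi$, and observe $Y_i=f(x_i-\theta^* )+Z_i$, $i=1,\dots,n$, where $x_i:=i/n$. Let $\Phi_2(t):=\int_{-\infty}^\infty\Phi(t+z)\phi(z)\,dz$ and $$M(\theta):=\int_0^1\!\!\int_0^1 \Phi_2\big(f(x_0)-f(x)\big)\, f(x_0+\theta^*-\theta)\,dx\,dx_0,$$ and assume that $\theta^*$ is the unique maximum point of $M$ modulo 1 (i.e. $M(\theta)<M(\theta^* )$ whenever $\theta\neq\theta^*\bmod 1$). Let $R_i$ be the rank of $Y_i$ among $Y_1,\dots,Y_n$ and let $\hat\theta_n$ be a maximizer over $\theta$ of $\widehat M_n(\theta):=\frac1n\sum_{i=1}^n\frac{R_i}{n}f(x_i-\theta)$. Then $\hat\theta_n\to\theta^*$ in probability as $n\to\infty$ (convergence understood modulo 1, i.e. the distance in $\mathbb{R}/\mathbb{Z}$ between $\hat\theta_n$ and $\theta^*$ tends to 0 in probability).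
   Context: $\hat\theta_n$ is the rank-based (R-)estimator of the shift; since $f$ and $\widehat M_n$ are 1-periodic, the shift is identified only modulo 1. *)

theory Defs
  imports "HOL-Probability.Probability"
begin

definition dist_mod1 :: "real \<Rightarrow> real \<Rightarrow> real" where
  "dist_mod1 a b = (INF k::int. \<bar>a - b - of_int k\<bar>)"

definition Phi :: "(real \<Rightarrow> real) \<Rightarrow> real \<Rightarrow> real" where
  "Phi \<phi> t = (LBINT y:{..t}. \<phi> y)"

definition Phi2 :: "(real \<Rightarrow> real) \<Rightarrow> real \<Rightarrow> real" where
  "Phi2 \<phi> t = (LINT z|lborel. Phi \<phi> (t + z) * \<phi> z)"

definition Mfun :: "(real \<Rightarrow> real) \<Rightarrow> (real \<Rightarrow> real) \<Rightarrow> real \<Rightarrow> real \<Rightarrow> real" where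
  "Mfun f \<phi> \<theta>s \<theta> =
     (LBINT x0=0..1. (LBINT x=0..1. Phi2 \<phi> (f x0 - f x) * f (x0 + \<theta>s - \<theta>)))"

text \<open>Rank of Y i among Y 1, ..., Y n (ties counted with \<le>; they occur with probability 0).\<close>
definition rank :: "(nat \<Rightarrow> real) \<Rightarrow> nat \<Rightarrow> nat \<Rightarrow> nat" where
  "rank Y n i = card {j \<in> {1..n}. Y j \<le> Y i}"

definition Mhat :: "(real \<Rightarrow> real) \<Rightarrow> (nat \<Rightarrow> real) \<Rightarrow> nat \<Rightarrow> real \<Rightarrow> real" where
  "Mhat f Y n \<theta> = (1 / real n) * (\<Sum>i=1..n. (real (rank Y n i) / real n) * f (real i / real n - \<theta>))"

end

theory Submission
  imports Defs
begin

lemma riemann_split: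
  fixes h :: "real \<Rightarrow> real"
  assumes cont: "continuous_on {a..a+1} h" and n: "n > 0"
  shows "m \<le> n \<Longrightarrow> integral {a..a + real m / n} h = (\<Sum>j=1..m. integral {a + (real j - 1)/n..a + real j/n} h)"
proof (induction m)
  case 0
  then show ?case by simp
next
  case (Suc m)
  have le1: "a + real (Suc m) / n \<le> a + 1" using Suc.prems n by (simp add: field_simps)
  have "integral {a..a + real m / n} h + integral {a + real m / n..a + real (Suc m) / n} h
        = integral {a..a + real (Suc m) / n} h"
  proof (rule Henstock_Kurzweil_Integration.integral_combine)
    show "a \<le> a + real m / real n" by simp
    show "a + real m / real n \<le> a + real (Suc m) / real n" using n by (simp add: divide_right_mono)
    show "h integrable_on {a..a + real (Suc m) / real n}"
      by (rule integrable_continuous_interval, rule continuous_on_subset[OF cont]) (use le1 in auto)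
  qed
  then show ?case using Suc by (simp add: add_diff_eq)
qed

lemma riemann_1d:
  fixes h :: "real \<Rightarrow> real"
  assumes cont: "continuous_on {a..a+1} h"
   and md: "\<forall>x\<in>{a..a+1}. \<forall>y\<in>{a..a+1}. \<bar>x-y\<bar> \<le> d \<longrightarrow> \<bar>h x - h y\<bar> \<le> e"
   and n: "n > 0" "1/real n \<le> d"
  shows "\<bar>(\<Sum>j=1..n. h (a + real j / n)) / n - integral {a..a+1} h\<bar> \<le> e"
proof -
  have I: "integral {a..a+1} h = (\<Sum>j=1..n. integral {a + (real j - 1)/n..a + real j/n} h)"
    using riemann_split[OF cont n(1), of n] n by simp
  have piece: "\<bar>h (a + real j / n) / n - integral {a + (real j - 1)/n..a + real j/n} h\<bar> \<le> e / n"
    if j: "j \<in> {1..n}" for j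
  proof -
    let ?l = "a + (real j - 1)/n" and ?r = "a + real j/n"
    have lr: "?l \<le> ?r" using n by (simp add: field_simps)
    have sub: "{?l..?r} \<subseteq> {a..a+1}" using j n by (auto simp: field_simps)
    have r_in: "?r \<in> {a..a+1}" using sub lr by auto
    have ch: "continuous_on {?l..?r} h" using continuous_on_subset[OF cont sub] .
    have "integral {?l..?r} (\<lambda>x. h x - h ?r) = integral {?l..?r} h - integral {?l..?r} (\<lambda>x. h ?r)"
      by (rule integral_diff) (auto intro!: integrable_continuous_interval ch)
    also have "integral {?l..?r} (\<lambda>x. h ?r) = h ?r / n" using lr by (simp add: diff_divide_distrib algebra_simps)
    finally have eq: "integral {?l..?r} h - h ?r / n = integral {?l..?r} (\<lambda>x. h x - h ?r)" by simp
    have "norm (integral {?l..?r} (\<lambda>x. h x - h ?r)) \<le> e * (?r - ?l)"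
    proof (rule integral_bound[OF lr])
      show "continuous_on {?l..?r} (\<lambda>x. h x - h ?r)" by (intro continuous_intros ch)
      fix t assume t: "t \<in> {?l..?r}"
      have "?l = ?r - 1/n" by (simp add: diff_divide_distrib)
      then have "\<bar>t - ?r\<bar> \<le> 1 / n" using t by auto
      then show "norm (h t - h ?r) \<le> e" using md t sub r_in n(2) by force
    qed
    moreover have "?r - ?l = 1/n" by (simp add: diff_divide_distrib)
    ultimately have "\<bar>integral {?l..?r} (\<lambda>x. h x - h ?r)\<bar> \<le> e / n" by simp
    then show ?thesis using eq by (simp add: abs_minus_commute)
  qed
  have "\<bar>(\<Sum>j=1..n. h (a + real j / n)) / n - integral {a..a+1} h\<bar>
      = \<bar>\<Sum>j=1..n. (h (a + real j / n) / n - integral {a + (real j - 1)/n..a + real j/n} h)\<bar>"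
    by (simp add: I sum_subtractf sum_divide_distrib)
  also have "\<dots> \<le> (\<Sum>j=1..n. \<bar>h (a + real j / n) / n - integral {a + (real j - 1)/n..a + real j/n} h\<bar>)"
    by (rule sum_abs)
  also have "\<dots> \<le> (\<Sum>j=1..n. e / n)" by (rule sum_mono) (use piece in auto)
  also have "\<dots> = e" using n by simp
  finally show ?thesis .
qed


lemma per_nat:
  fixes k :: "real \<Rightarrow> 'b"
  assumes per: "\<forall>x. k (x+1) = k x"
  shows "k (x + real n) = k x"
proof (induction n)
  case (Suc n)
  have "k (x + real (Suc n)) = k ((x + real n) + 1)" by (simp add: algebra_simps)
  then show ?case using per Suc by simp
qed simp

lemma per_int:
  fixes k :: "real \<Rightarrow> 'b"
  assumes per: "\<forall>x. k (x+1) = k x"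
  shows "k (x + real_of_int m) = k x"
proof (cases m rule: int_cases)
  case (nonneg n)
  then show ?thesis using per_nat[OF per] by simp
next
  case (neg n)
  have "k (x + real_of_int m) = k ((x + real_of_int m) + real (Suc n))"
    using per_nat[OF per, of "x + real_of_int m" "Suc n"] by simp
  also have "(x + real_of_int m) + real (Suc n) = x" using neg by simp
  finally show ?thesis .
qed

lemma periodic_integral_shift:
  fixes k :: "real \<Rightarrow> real"
  assumes cont: "continuous_on UNIV k" and per: "\<forall>x. k (x+1) = k x"
  shows "integral {a..a+1} k = integral {0..1} k"
proof -
  define m where "m = real_of_int \<lfloor>a\<rfloor>"
  have m1: "m \<le> a" "a \<le> m + 1" unfolding m_def by linarith+
  have int: "\<And>c d. k integrable_on {c..d}"
    by (rule integrable_continuous_interval, rule continuous_on_subset[OF cont]) auto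
  have "integral {a..m+1} k + integral {m+1..a+1} k = integral {a..a+1} k"
    by (rule Henstock_Kurzweil_Integration.integral_combine) (use m1 int in auto)
  moreover have "integral {m+1..a+1} k = integral {m..a} k"
  proof -
    have "integral {m..a} (k \<circ> (+) 1) = integral {m+1..a+1} k"
      using integral_shift_Icc_real[of m a k 1] by (simp add: add.commute)
    moreover have "k \<circ> (+) 1 = k" using per by (auto simp: add.commute)
    ultimately show ?thesis by simp
  qed
  moreover have "integral {m..a} k + integral {a..m+1} k = integral {m..m+1} k"
    by (rule Henstock_Kurzweil_Integration.integral_combine) (use m1 int in auto)
  moreover have "integral {m..m+1} k = integral {0..1} k"
  proof -
    have "integral {0..1} (k \<circ> (+) m) = integral {0+m..1+m} k"
      using integral_shift_Icc_real[of 0 1 k m] by simp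
    moreover have "k \<circ> (+) m = k" unfolding m_def using per_int[OF per]
      by (auto simp: add.commute)
    ultimately show ?thesis by (simp add: add.commute)
  qed
  ultimately show ?thesis by linarith
qed


lemma cont_slice:
  fixes G :: "real \<Rightarrow> real \<Rightarrow> real"
  assumes cont: "continuous_on UNIV (\<lambda>p. G (fst p) (snd p))"
  shows "continuous_on S (G u)"
proof -
  have "continuous_on S ((\<lambda>p. G (fst p) (snd p)) \<circ> (\<lambda>v. (u, v)))"
    by (rule continuous_on_compose) (auto intro!: continuous_intros continuous_on_subset[OF cont])
  then show ?thesis by (simp add: o_def)
qed

lemma cont_param:
  fixes G :: "real \<Rightarrow> real \<Rightarrow> real"
  assumes cont: "continuous_on UNIV (\<lambda>p. G (fst p) (snd p))"
  shows "continuous_on S (\<lambda>u. integral {c..d} (G u))"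
proof -
  have "continuous_on S (\<lambda>u. integral (cbox c d) (G u))"
    by (rule integral_continuous_on_param)
       (rule continuous_on_subset[OF cont[unfolded split_beta'[symmetric]]], auto)
  then show ?thesis by simp
qed

lemma riemann_2d:
  fixes G :: "real \<Rightarrow> real \<Rightarrow> real"
  assumes cont: "continuous_on UNIV (\<lambda>p. G (fst p) (snd p))"
   and per1: "\<forall>u v. G (u+1) v = G u v" and per2: "\<forall>u v. G u (v+1) = G u v"
  shows "(\<lambda>n. (\<Sum>i=1..n. \<Sum>j=1..n. G (a + real i/n) (a + real j/n)) / (real n)^2)
           \<longlonglongrightarrow> integral {0..1} (\<lambda>u. integral {0..1} (G u))"
proof (rule LIMSEQ_I)
  fix e :: real assume e: "e > 0"
  define e' where "e' = e / 3"
  have e': "e' > 0" using e by (simp add: e'_def)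
  define S where "S = {a..a+1} \<times> {a..a+1}"
  have "uniformly_continuous_on S (\<lambda>p. G (fst p) (snd p))"
    unfolding S_def
    by (rule compact_uniformly_continuous[OF continuous_on_subset[OF cont]]) (auto intro: compact_Times)
  then obtain d where d: "d > 0"
    and dd: "\<And>p q. p \<in> S \<Longrightarrow> q \<in> S \<Longrightarrow> dist q p < d \<Longrightarrow> dist (G (fst q) (snd q)) (G (fst p) (snd p)) < e'"
    unfolding uniformly_continuous_on_def using e' by metis
  define d' where "d' = d / 2"
  have d': "d' > 0" "d' < d" using d by (auto simp: d'_def)
  define H where "H = (\<lambda>u. integral {0..1} (G u))"
  have Gper: "\<forall>v. G u (v+1) = G u v" for u using per2 by auto
  have Hshift: "integral {a..a+1} (G u) = H u" for u
    unfolding H_def by (rule periodic_integral_shift[OF cont_slice[OF cont] Gper])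
  have Hcont: "continuous_on S' H" for S' unfolding H_def by (rule cont_param[OF cont])
  have Hper: "\<forall>x. H (x+1) = H x" unfolding H_def using per1 by (auto intro!: integral_cong)
  have inner_mod: "\<forall>x\<in>{a..a+1}. \<forall>y\<in>{a..a+1}. \<bar>x-y\<bar> \<le> d' \<longrightarrow> \<bar>G u x - G u y\<bar> \<le> e'"
    if u: "u \<in> {a..a+1}" for u
  proof (intro ballI impI)
    fix x y assume xy: "x \<in> {a..a+1}" "y \<in> {a..a+1}" "\<bar>x-y\<bar> \<le> d'"
    have "dist (u,x) (u,y) < d" using xy d' by (simp add: dist_Pair_Pair dist_real_def)
    then have "dist (G u x) (G u y) < e'" using dd[of "(u,y)" "(u,x)"] u xy by (auto simp: S_def)
    then show "\<bar>G u x - G u y\<bar> \<le> e'" by (simp add: dist_real_def)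
  qed
  have outer_mod: "\<forall>x\<in>{a..a+1}. \<forall>y\<in>{a..a+1}. \<bar>x-y\<bar> \<le> d' \<longrightarrow> \<bar>H x - H y\<bar> \<le> e'"
  proof (intro ballI impI)
    fix x y assume xy: "x \<in> {a..a+1}" "y \<in> {a..a+1}" "\<bar>x-y\<bar> \<le> d'"
    have ptw: "\<bar>G x v - G y v\<bar> \<le> e'" if v: "v \<in> {a..a+1}" for v
    proof -
      have "dist (x,v) (y,v) < d" using xy d' by (simp add: dist_Pair_Pair dist_real_def)
      then have "dist (G x v) (G y v) < e'" using dd[of "(y,v)" "(x,v)"] v xy by (auto simp: S_def)
      then show ?thesis by (simp add: dist_real_def)
    qed
    have "integral {a..a+1} (\<lambda>v. G x v - G y v) = integral {a..a+1} (G x) - integral {a..a+1} (G y)"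
      by (rule integral_diff) (auto intro!: integrable_continuous_interval cont_slice[OF cont])
    moreover have "norm (integral {a..a+1} (\<lambda>v. G x v - G y v)) \<le> e' * (a + 1 - a)"
      by (rule integral_bound) (auto intro!: continuous_intros cont_slice[OF cont] ptw)
    ultimately show "\<bar>H x - H y\<bar> \<le> e'" using Hshift by simp
  qed
  obtain N :: nat where N0: "1 / d' < real N" using reals_Archimedean2 by blast
  have Npos: "real N > 0" using N0 d' by (meson less_trans zero_less_divide_1_iff)
  then have N: "N > 0" "1 / real N \<le> d'" using N0 d'
    by (auto simp: divide_less_eq mult.commute pos_divide_le_eq)
  show "\<exists>no. \<forall>n\<ge>no. norm ((\<Sum>i=1..n. \<Sum>j=1..n. G (a + real i/n) (a + real j/n)) / (real n)^2 - integral {0..1} H) < e"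
  proof (intro exI allI impI)
    fix n assume n: "n \<ge> N"
    have n0: "n > 0" using n N by auto
    have "1 / real n \<le> 1 / real N"
      by (rule divide_left_mono) (use n N in auto)
    then have nd: "1 / real n \<le> d'" using N by linarith
    let ?u = "\<lambda>i. a + real i / n"
    have u_in: "?u i \<in> {a..a+1}" if "i \<in> {1..n}" for i using that n0 by auto
    have inner: "\<bar>(\<Sum>j=1..n. G (?u i) (?u j)) / n - H (?u i)\<bar> \<le> e'" if i: "i \<in> {1..n}" for i
      using riemann_1d[OF cont_slice[OF cont] inner_mod[OF u_in[OF i]] n0 nd] Hshift by simp
    have outer: "\<bar>(\<Sum>i=1..n. H (?u i)) / n - integral {a..a+1} H\<bar> \<le> e'"
      by (rule riemann_1d[OF Hcont outer_mod n0 nd])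
    have IH: "integral {a..a+1} H = integral {0..1} H"
      by (rule periodic_integral_shift[OF Hcont Hper])
    have eq: "(\<Sum>i=1..n. \<Sum>j=1..n. G (?u i) (?u j)) / (real n)^2 - integral {0..1} H
        = (\<Sum>i=1..n. ((\<Sum>j=1..n. G (?u i) (?u j)) / n - H (?u i))) / n
          + ((\<Sum>i=1..n. H (?u i)) / n - integral {a..a+1} H)"
    proof -
      have "(\<Sum>i=1..n. ((\<Sum>j=1..n. G (?u i) (?u j)) / n - H (?u i)))
            = (\<Sum>i=1..n. \<Sum>j=1..n. G (?u i) (?u j)) / n - (\<Sum>i=1..n. H (?u i))"
        by (simp add: sum_subtractf sum_divide_distrib)
      then show ?thesis using IH by (simp add: power2_eq_square diff_divide_distrib)
    qed
    have "\<bar>(\<Sum>i=1..n. ((\<Sum>j=1..n. G (?u i) (?u j)) / n - H (?u i)))\<bar> \<le> (\<Sum>i=1..n. e')"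
      by (rule order_trans[OF sum_abs sum_mono]) (use inner in auto)
    then have "\<bar>(\<Sum>i=1..n. ((\<Sum>j=1..n. G (?u i) (?u j)) / n - H (?u i))) / n\<bar> \<le> e'"
      using n0 by (simp add: field_simps)
    then have "\<bar>(\<Sum>i=1..n. \<Sum>j=1..n. G (?u i) (?u j)) / (real n)^2 - integral {0..1} H\<bar> \<le> 2 * e'"
      using outer unfolding eq by linarith
    then show "norm ((\<Sum>i=1..n. \<Sum>j=1..n. G (?u i) (?u j)) / (real n)^2 - integral {0..1} H) < e"
      using e e'_def by simp
  qed
qed


locale setting = prob_space M for M :: "'a measure" +
  fixes \<phi> :: "real \<Rightarrow> real" and Z :: "nat \<Rightarrow> 'a \<Rightarrow> real"
  assumes phi_meas: "\<phi> \<in> borel_measurable borel" and phi_nn: "\<forall>z. \<phi> z \<ge> 0"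
   and indep: "indep_vars (\<lambda>_. borel) Z UNIV"
   and distZ: "\<forall>i. distributed M lborel (Z i) (\<lambda>z. ennreal (\<phi> z))"
begin

definition D where "D = density lborel (\<lambda>z. ennreal (\<phi> z))"

lemma Z_meas[measurable]: "Z i \<in> borel_measurable M"
  using distZ unfolding distributed_def by auto

lemma phi_meas'[measurable]: "\<phi> \<in> borel_measurable lborel"
  using phi_meas by simp

lemma D_distr: "D = distr M lborel (Z i)"
  using distZ unfolding distributed_def D_def by auto

lemma D_distr': "D = distr M borel (Z i)"
  unfolding D_distr[of i] by (rule distr_cong) auto

lemma D_prob: "prob_space D"
  unfolding D_distr[of 0] by (rule prob_space_distr) simp

lemma sets_D[simp, measurable_cong]: "sets D = sets borel"
  unfolding D_def by simp

lemma space_D[simp]: "space D = UNIV"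
  unfolding D_def by simp

lemma Phi_eq: "Phi \<phi> t = measure D {..t}"
proof -
  have "measure D {..t} = integral\<^sup>L D (indicator {..t})"
    by (simp)
  also have "\<dots> = integral\<^sup>L lborel (\<lambda>x. \<phi> x *\<^sub>R indicator {..t} x)"
    unfolding D_def by (rule integral_density) (auto simp: phi_nn)
  finally show ?thesis unfolding Phi_def set_lebesgue_integral_def
    by (simp add: mult.commute)
qed

lemma D_singleton: "measure D {t} = 0"
proof -
  have "emeasure D {t} = (\<integral>\<^sup>+x. ennreal (\<phi> x) * indicator {t} x \<partial>lborel)"
    unfolding D_def by (subst emeasure_density) auto
  also have "\<dots> = (\<integral>\<^sup>+x. ennreal (\<phi> t) * indicator {t} x \<partial>lborel)"
    by (rule nn_integral_cong) (auto split: split_indicator)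
  also have "\<dots> = 0" by (subst nn_integral_cmult_indicator) auto
  finally show ?thesis by (simp add: measure_def)
qed

lemma Phi_mono: "mono (Phi \<phi>)"
proof -
  interpret D: prob_space D by (rule D_prob)
  show ?thesis unfolding mono_def Phi_eq by (auto intro!: D.finite_measure_mono)
qed

lemma Phi_meas[measurable]: "Phi \<phi> \<in> borel_measurable borel"
  by (rule borel_measurable_mono[OF Phi_mono])

lemma Phi_bounds: "0 \<le> Phi \<phi> t" "Phi \<phi> t \<le> 1"
proof -
  interpret D: prob_space D by (rule D_prob)
  show "0 \<le> Phi \<phi> t" "Phi \<phi> t \<le> 1" unfolding Phi_eq by auto
qed

lemma Phi2_eq: "Phi2 \<phi> c = (\<integral>x. Phi \<phi> (c + x) \<partial>D)"
proof -
  have "(\<integral>x. Phi \<phi> (c + x) \<partial>D) = integral\<^sup>L lborel (\<lambda>x. \<phi> x *\<^sub>R Phi \<phi> (c + x))"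
    unfolding D_def by (rule integral_density) (auto simp: phi_nn)
  then show ?thesis unfolding Phi2_def by (simp add: mult.commute)
qed

lemma indep_pairs:
  fixes g1 g2 :: "real \<Rightarrow> real \<Rightarrow> real"
  assumes disj: "{i,j} \<inter> {k,l} = {}"
    and g1[measurable]: "(\<lambda>p. g1 (fst p) (snd p)) \<in> borel_measurable borel"
    and g2[measurable]: "(\<lambda>p. g2 (fst p) (snd p)) \<in> borel_measurable borel"
  shows "indep_var borel (\<lambda>\<omega>. g1 (Z i \<omega>) (Z j \<omega>)) borel (\<lambda>\<omega>. g2 (Z k \<omega>) (Z l \<omega>))"
proof -
  have ind: "indep_var (PiM {i,j} (\<lambda>_. borel)) (\<lambda>\<omega>. restrict (\<lambda>i. Z i \<omega>) {i,j})
                 (PiM {k,l} (\<lambda>_. borel)) (\<lambda>\<omega>. restrict (\<lambda>i. Z i \<omega>) {k,l})"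
    by (rule indep_var_restrict[OF indep disj]) auto
  have m1: "(\<lambda>x. g1 (x i) (x j)) \<in> measurable (PiM {i,j} (\<lambda>_. borel)) borel"
  proof -
    have "(\<lambda>x. (x i, x j)) \<in> measurable (PiM {i,j} (\<lambda>_. borel)) (borel \<Otimes>\<^sub>M borel)"
      by measurable
    then have "(\<lambda>x. (x i, x j)) \<in> measurable (PiM {i,j} (\<lambda>_. borel)) (borel :: (real \<times> real) measure)"
      by (simp add: borel_prod)
    from measurable_compose[OF this g1] show ?thesis by simp
  qed
  have m2: "(\<lambda>x. g2 (x k) (x l)) \<in> measurable (PiM {k,l} (\<lambda>_. borel)) borel"
  proof -
    have "(\<lambda>x. (x k, x l)) \<in> measurable (PiM {k,l} (\<lambda>_. borel)) (borel \<Otimes>\<^sub>M borel)"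
      by measurable
    then have "(\<lambda>x. (x k, x l)) \<in> measurable (PiM {k,l} (\<lambda>_. borel)) (borel :: (real \<times> real) measure)"
      by (simp add: borel_prod)
    from measurable_compose[OF this g2] show ?thesis by simp
  qed
  from indep_var_compose[OF ind m1 m2] show ?thesis by (simp add: o_def)
qed

end


context setting begin

lemma indep_ij: "i \<noteq> j \<Longrightarrow> indep_var borel (Z i) borel (Z j)"
proof -
  have "fst \<in> borel_measurable (borel :: (real \<times> real) measure)"
    using measurable_fst[of "borel :: real measure" "borel :: real measure"] by (simp add: borel_prod)
  moreover assume "i \<noteq> j"
  ultimately show ?thesis using indep_pairs[of i i j j "\<lambda>x y. x" "\<lambda>x y. x"] by simp
qed

lemma pair_integral:
  fixes g :: "real \<Rightarrow> real \<Rightarrow> real"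
  assumes ij: "i \<noteq> j" and gm: "(\<lambda>p. g (fst p) (snd p)) \<in> borel_measurable borel"
    and gb: "\<And>x y. \<bar>g x y\<bar> \<le> B"
  shows "(\<integral>\<omega>. g (Z i \<omega>) (Z j \<omega>) \<partial>M) = (\<integral>x. \<integral>y. g x y \<partial>D \<partial>D)"
proof -
  interpret D: prob_space D by (rule D_prob)
  interpret DD: pair_prob_space D D by unfold_locales
  have gm': "(\<lambda>p. g (fst p) (snd p)) \<in> borel_measurable (borel \<Otimes>\<^sub>M borel)"
    using gm by (simp add: borel_prod)
  have gm'': "(\<lambda>p. g (fst p) (snd p)) \<in> borel_measurable (D \<Otimes>\<^sub>M D)"
    using gm' by (simp cong: measurable_cong_sets)
  have "distr M borel (Z i) \<Otimes>\<^sub>M distr M borel (Z j) = distr M (borel \<Otimes>\<^sub>M borel) (\<lambda>x. (Z i x, Z j x))"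
    using indep_ij[OF ij] unfolding indep_var_distribution_eq by auto
  then have DDeq: "D \<Otimes>\<^sub>M D = distr M (borel \<Otimes>\<^sub>M borel) (\<lambda>x. (Z i x, Z j x))"
    using D_distr'[of i] D_distr'[of j] by simp
  have "(\<integral>\<omega>. g (Z i \<omega>) (Z j \<omega>) \<partial>M) = integral\<^sup>L (distr M (borel \<Otimes>\<^sub>M borel) (\<lambda>x. (Z i x, Z j x))) (\<lambda>p. g (fst p) (snd p))"
    by (subst integral_distr) (auto intro: gm')
  also have "\<dots> = integral\<^sup>L (D \<Otimes>\<^sub>M D) (\<lambda>p. g (fst p) (snd p))" using DDeq by simp
  also have "\<dots> = (\<integral>x. \<integral>y. g x y \<partial>D \<partial>D)"
  proof -
    have "integrable (D \<Otimes>\<^sub>M D) (\<lambda>p. g (fst p) (snd p))"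
      by (rule DD.P.integrable_const_bound[where B=B]) (auto simp: gb gm'')
    from DD.integral_fst'[OF this] show ?thesis by simp
  qed
  finally show ?thesis .
qed

lemma prob_diff_le:
  assumes ij: "i \<noteq> j"
  shows "prob {\<omega> \<in> space M. Z j \<omega> - Z i \<omega> \<le> c} = Phi2 \<phi> c"
proof -
  interpret D: prob_space D by (rule D_prob)
  let ?g = "\<lambda>x y::real. if y - x \<le> c then 1 else 0 :: real"
  have gm: "(\<lambda>p. ?g (fst p) (snd p)) \<in> borel_measurable borel"
  proof -
    have "(\<lambda>p. ?g (fst p) (snd p)) \<in> borel_measurable (borel \<Otimes>\<^sub>M borel)" by measurable
    then show ?thesis by (simp add: borel_prod)
  qed
  have "prob {\<omega> \<in> space M. Z j \<omega> - Z i \<omega> \<le> c} = (\<integral>\<omega>. ?g (Z i \<omega>) (Z j \<omega>) \<partial>M)"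
  proof -
    have "(\<lambda>\<omega>. ?g (Z i \<omega>) (Z j \<omega>)) = indicator {\<omega>. Z j \<omega> - Z i \<omega> \<le> c}"
      by (auto simp: indicator_def)
    moreover have "{\<omega> \<in> space M. Z j \<omega> - Z i \<omega> \<le> c} = {\<omega>. Z j \<omega> - Z i \<omega> \<le> c} \<inter> space M" by auto
    ultimately show ?thesis by simp
  qed
  also have "\<dots> = (\<integral>x. \<integral>y. ?g x y \<partial>D \<partial>D)"
    by (rule pair_integral[OF ij gm, where B=1]) auto
  also have "\<dots> = (\<integral>x. Phi \<phi> (c + x) \<partial>D)"
  proof (rule Bochner_Integration.integral_cong[OF refl])
    fix x
    have "(\<lambda>y. ?g x y) = indicator {..c + x}" by (auto simp: indicator_def)
    then show "(\<integral>y. ?g x y \<partial>D) = Phi \<phi> (c + x)" by (simp add: Phi_eq)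
  qed
  also have "\<dots> = Phi2 \<phi> c" by (simp add: Phi2_eq)
  finally show ?thesis .
qed

lemma prob_diff_eq:
  assumes ij: "i \<noteq> j"
  shows "prob {\<omega> \<in> space M. Z j \<omega> - Z i \<omega> = c} = 0"
proof -
  interpret D: prob_space D by (rule D_prob)
  let ?g = "\<lambda>x y::real. if y - x = c then 1 else 0 :: real"
  have gm: "(\<lambda>p. ?g (fst p) (snd p)) \<in> borel_measurable borel"
  proof -
    have "(\<lambda>p. ?g (fst p) (snd p)) \<in> borel_measurable (borel \<Otimes>\<^sub>M borel)" by measurable
    then show ?thesis by (simp add: borel_prod)
  qed
  have "prob {\<omega> \<in> space M. Z j \<omega> - Z i \<omega> = c} = (\<integral>\<omega>. ?g (Z i \<omega>) (Z j \<omega>) \<partial>M)"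
  proof -
    have "(\<lambda>\<omega>. ?g (Z i \<omega>) (Z j \<omega>)) = indicator {\<omega>. Z j \<omega> - Z i \<omega> = c}"
      by (auto simp: indicator_def)
    moreover have "{\<omega> \<in> space M. Z j \<omega> - Z i \<omega> = c} = {\<omega>. Z j \<omega> - Z i \<omega> = c} \<inter> space M" by blast
    ultimately show ?thesis by simp
  qed
  also have "\<dots> = (\<integral>x. \<integral>y. ?g x y \<partial>D \<partial>D)"
    by (rule pair_integral[OF ij gm, where B=1]) auto
  also have "\<dots> = (\<integral>x. 0 \<partial>D)"
  proof (rule Bochner_Integration.integral_cong[OF refl])
    fix x
    have "(\<lambda>y. ?g x y) = indicator {c + x}" by (auto simp: indicator_def)
    then show "(\<integral>y. ?g x y \<partial>D) = 0" by (simp add: D_singleton)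
  qed
  finally show ?thesis by simp
qed

lemma Phi2_bounds: "0 \<le> Phi2 \<phi> c" "Phi2 \<phi> c \<le> 1"
proof -
  have e: "Phi2 \<phi> c = prob {\<omega>\<in>space M. Z 1 \<omega> - Z 0 \<omega> \<le> c}" using prob_diff_le[of 0 1 c] by simp
  show "0 \<le> Phi2 \<phi> c" unfolding e by (rule measure_nonneg)
  show "Phi2 \<phi> c \<le> 1" unfolding e by (rule prob_le_1)
qed

lemma Phi2_cont: "continuous_on S (Phi2 \<phi>)"
proof -
  let ?Q = "distr M borel (\<lambda>\<omega>. Z 1 \<omega> - Z 0 \<omega>)"
  interpret Q: real_distribution ?Q
    by (auto simp: real_distribution_def real_distribution_axioms_def intro!: prob_space_distr)
  have cdfQ: "cdf ?Q c = Phi2 \<phi> c" for c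
  proof -
    have "cdf ?Q c = measure M ((\<lambda>\<omega>. Z 1 \<omega> - Z 0 \<omega>) -` {..c} \<inter> space M)"
      unfolding cdf_def by (subst measure_distr) auto
    also have "(\<lambda>\<omega>. Z 1 \<omega> - Z 0 \<omega>) -` {..c} \<inter> space M = {\<omega> \<in> space M. Z 1 \<omega> - Z 0 \<omega> \<le> c}" by auto
    finally show ?thesis using prob_diff_le[of 0 1 c] by simp
  qed
  have "isCont (cdf ?Q) c" for c
  proof -
    have "measure ?Q {c} = measure M ((\<lambda>\<omega>. Z 1 \<omega> - Z 0 \<omega>) -` {c} \<inter> space M)"
      by (subst measure_distr) auto
    also have "(\<lambda>\<omega>. Z 1 \<omega> - Z 0 \<omega>) -` {c} \<inter> space M = {\<omega> \<in> space M. Z 1 \<omega> - Z 0 \<omega> = c}" by blast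
    finally show ?thesis using prob_diff_eq[of 0 1 c] by (subst Q.isCont_cdf) simp
  qed
  then have "isCont (Phi2 \<phi>) c" for c using cdfQ by (metis ext)
  then show ?thesis by (simp add: continuous_at_imp_continuous_on)
qed

end


context setting begin

definition Ind :: "(nat \<Rightarrow> real) \<Rightarrow> nat \<Rightarrow> nat \<Rightarrow> 'a \<Rightarrow> real" where
  "Ind a i j \<omega> = (if a j + Z j \<omega> \<le> a i + Z i \<omega> then 1 else 0)"

definition pI :: "(nat \<Rightarrow> real) \<Rightarrow> nat \<Rightarrow> nat \<Rightarrow> real" where
  "pI a i j = expectation (Ind a i j)"

lemma Ind_meas[measurable]: "Ind a i j \<in> borel_measurable M"
  unfolding Ind_def by measurable

lemma Ind_bounds: "0 \<le> Ind a i j \<omega>" "Ind a i j \<omega> \<le> 1"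
  unfolding Ind_def by auto

lemma Ind_int: "integrable M (Ind a i j)"
  by (rule integrable_const_bound[where B=1]) (auto simp: Ind_def)

lemma pI_bounds: "0 \<le> pI a i j" "pI a i j \<le> 1"
proof -
  show "0 \<le> pI a i j" unfolding pI_def by (rule integral_nonneg_AE) (auto simp: Ind_def)
  have "pI a i j \<le> expectation (\<lambda>_. 1)" unfolding pI_def
    by (rule integral_mono) (auto simp: Ind_int Ind_def)
  then show "pI a i j \<le> 1" by (simp add: prob_space)
qed

lemma pI_diag: "pI a i i = 1"
  unfolding pI_def Ind_def by (simp add: prob_space)

lemma pI_offdiag: "i \<noteq> j \<Longrightarrow> pI a i j = Phi2 \<phi> (a i - a j)"
proof -
  assume ij: "i \<noteq> j"
  have "Ind a i j = indicator {\<omega>. Z j \<omega> - Z i \<omega> \<le> a i - a j}"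
    by (rule ext) (simp add: Ind_def indicator_def algebra_simps)
  then have "pI a i j = prob ({\<omega>. Z j \<omega> - Z i \<omega> \<le> a i - a j} \<inter> space M)"
    unfolding pI_def by simp
  also have "{\<omega>. Z j \<omega> - Z i \<omega> \<le> a i - a j} \<inter> space M = {\<omega>\<in>space M. Z j \<omega> - Z i \<omega> \<le> a i - a j}"
    by blast
  finally show ?thesis using prob_diff_le[OF ij] by simp
qed

definition Xc :: "(nat \<Rightarrow> real) \<Rightarrow> (nat \<Rightarrow> real) \<Rightarrow> nat \<times> nat \<Rightarrow> 'a \<Rightarrow> real" where
  "Xc a c p \<omega> = c (fst p) * (Ind a (fst p) (snd p) \<omega> - pI a (fst p) (snd p))"

lemma Xc_meas[measurable]: "Xc a c p \<in> borel_measurable M"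
  unfolding Xc_def by measurable

lemma Xc_bound: assumes "\<And>i. \<bar>c i\<bar> \<le> B" shows "\<bar>Xc a c p \<omega>\<bar> \<le> B"
proof -
  have "\<bar>Ind a (fst p) (snd p) \<omega> - pI a (fst p) (snd p)\<bar> \<le> 1"
    using Ind_bounds[of a "fst p" "snd p" \<omega>] pI_bounds[of a "fst p" "snd p"] by auto
  then have "\<bar>c (fst p)\<bar> * \<bar>Ind a (fst p) (snd p) \<omega> - pI a (fst p) (snd p)\<bar> \<le> B * 1"
    using assms abs_ge_zero order_trans by (intro mult_mono) blast+
  then show ?thesis unfolding Xc_def by (simp add: abs_mult)
qed

lemma Xc_abs: "\<bar>Xc a c p \<omega>\<bar> \<le> \<bar>c (fst p)\<bar>"
  using Xc_bound[of "\<lambda>i. if i = fst p then c i else 0" "\<bar>c (fst p)\<bar>" a p \<omega>]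
  by (simp add: Xc_def)

lemma Xc_int: "integrable M (Xc a c p)"
  by (intro integrable_const_bound[where B="\<bar>c (fst p)\<bar>"]) (auto simp: Xc_abs)

lemma Xc_mean: "expectation (Xc a c p) = 0"
proof -
  have "expectation (Xc a c p) = c (fst p) * (expectation (Ind a (fst p) (snd p)) - pI a (fst p) (snd p))"
    unfolding Xc_def using Ind_int by (simp add: prob_space)
  then show ?thesis by (simp add: pI_def)
qed

lemma Xc_prod_abs: "\<bar>Xc a c p \<omega> * Xc a c q \<omega>\<bar> \<le> \<bar>c (fst p)\<bar> * \<bar>c (fst q)\<bar>"
  unfolding abs_mult by (rule mult_mono) (auto simp: Xc_abs)

lemma Xc_prod_int: "integrable M (\<lambda>\<omega>. Xc a c p \<omega> * Xc a c q \<omega>)"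
  by (intro integrable_const_bound[where B="\<bar>c (fst p)\<bar> * \<bar>c (fst q)\<bar>"]) (auto simp: Xc_prod_abs)

lemma Xc_disjoint:
  assumes disj: "{fst p, snd p} \<inter> {fst q, snd q} = {}"
  shows "expectation (\<lambda>\<omega>. Xc a c p \<omega> * Xc a c q \<omega>) = 0"
proof -
  obtain i j where p: "p = (i,j)" by (cases p)
  obtain k l where q: "q = (k,l)" by (cases q)
  let ?g1 = "\<lambda>x y. c i * ((if a j + y \<le> a i + x then 1 else 0) - pI a i j)"
  let ?g2 = "\<lambda>x y. c k * ((if a l + y \<le> a k + x then 1 else 0) - pI a k l)"
  have m1: "(\<lambda>p. ?g1 (fst p) (snd p)) \<in> borel_measurable borel"
  proof -
    have "(\<lambda>p. ?g1 (fst p) (snd p)) \<in> borel_measurable (borel \<Otimes>\<^sub>M borel)" by measurable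
    then show ?thesis by (simp add: borel_prod)
  qed
  have m2: "(\<lambda>p. ?g2 (fst p) (snd p)) \<in> borel_measurable borel"
  proof -
    have "(\<lambda>p. ?g2 (fst p) (snd p)) \<in> borel_measurable (borel \<Otimes>\<^sub>M borel)" by measurable
    then show ?thesis by (simp add: borel_prod)
  qed
  have ind: "indep_var borel (\<lambda>\<omega>. ?g1 (Z i \<omega>) (Z j \<omega>)) borel (\<lambda>\<omega>. ?g2 (Z k \<omega>) (Z l \<omega>))"
    by (rule indep_pairs[OF _ m1 m2]) (use disj p q in auto)
  have e1: "(\<lambda>\<omega>. ?g1 (Z i \<omega>) (Z j \<omega>)) = Xc a c p" by (rule ext) (simp add: Xc_def Ind_def p)
  have e2: "(\<lambda>\<omega>. ?g2 (Z k \<omega>) (Z l \<omega>)) = Xc a c q" by (rule ext) (simp add: Xc_def Ind_def q)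
  have "expectation (\<lambda>\<omega>. Xc a c p \<omega> * Xc a c q \<omega>) = expectation (Xc a c p) * expectation (Xc a c q)"
    by (rule indep_var_lebesgue_integral[OF ind[unfolded e1 e2] Xc_int Xc_int])
  then show ?thesis by (simp add: Xc_mean)
qed

end


context setting begin

definition Ssum :: "(nat \<Rightarrow> real) \<Rightarrow> (nat \<Rightarrow> real) \<Rightarrow> nat \<Rightarrow> 'a \<Rightarrow> real" where
  "Ssum a c n \<omega> = (\<Sum>i=1..n. \<Sum>j=1..n. c i * Ind a i j \<omega>)"

definition ES :: "(nat \<Rightarrow> real) \<Rightarrow> (nat \<Rightarrow> real) \<Rightarrow> nat \<Rightarrow> real" where
  "ES a c n = (\<Sum>i=1..n. \<Sum>j=1..n. c i * pI a i j)"

lemma Ssum_meas[measurable]: "Ssum a c n \<in> borel_measurable M"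
  unfolding Ssum_def by measurable

lemma S_center: "Ssum a c n \<omega> - ES a c n = (\<Sum>p\<in>{1..n}\<times>{1..n}. Xc a c p \<omega>)"
proof -
  have "Ssum a c n \<omega> - ES a c n = (\<Sum>i=1..n. \<Sum>j=1..n. c i * (Ind a i j \<omega> - pI a i j))"
    unfolding Ssum_def ES_def by (simp add: sum_subtractf right_diff_distrib)
  also have "\<dots> = (\<Sum>p\<in>{1..n}\<times>{1..n}. Xc a c p \<omega>)"
    unfolding Xc_def by (simp add: sum.cartesian_product split_beta')
  finally show ?thesis .
qed

lemma w_sum:
  assumes "i \<in> {1..n}" "j \<in> {1..n}"
  shows "(\<Sum>q\<in>{1..n}\<times>{1..n}. (of_bool (fst q = i) + of_bool (fst q = j) + of_bool (snd q = i) + of_bool (snd q = j) :: real))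
         = 4 * real n"
proof -
  have "(\<Sum>q\<in>{1..n}\<times>{1..n}. (of_bool (fst q = i) + of_bool (fst q = j) + of_bool (snd q = i) + of_bool (snd q = j) :: real))
      = (\<Sum>k=1..n. \<Sum>l=1..n. (of_bool (k = i) + of_bool (k = j) + of_bool (l = i) + of_bool (l = j) :: real))"
    by (simp add: sum.cartesian_product split_beta')
  also have "\<dots> = 4 * real n"
  proof -
    have "{1..n} \<inter> {i} = {i}" "{1..n} \<inter> {j} = {j}" using assms by auto
    then show ?thesis by (simp add: sum.distrib sum_distrib_left[symmetric])
  qed
  finally show ?thesis .
qed

lemma var_bound:
  assumes cB: "\<And>i. \<bar>c i\<bar> \<le> B"
  shows "expectation (\<lambda>\<omega>. (Ssum a c n \<omega> - ES a c n)\<^sup>2) \<le> 4 * real n ^ 3 * B\<^sup>2"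
proof -
  let ?P = "{1..n}\<times>{1..n}"
  let ?w = "\<lambda>p q. (of_bool (fst q = fst p) + of_bool (fst q = snd p) + of_bool (snd q = fst p) + of_bool (snd q = snd p) :: real)"
  have sq: "(Ssum a c n \<omega> - ES a c n)\<^sup>2 = (\<Sum>p\<in>?P. \<Sum>q\<in>?P. Xc a c p \<omega> * Xc a c q \<omega>)" for \<omega>
    unfolding S_center power2_eq_square by (rule sum_product)
  have "expectation (\<lambda>\<omega>. (Ssum a c n \<omega> - ES a c n)\<^sup>2)
        = (\<Sum>p\<in>?P. \<Sum>q\<in>?P. expectation (\<lambda>\<omega>. Xc a c p \<omega> * Xc a c q \<omega>))"
    unfolding sq
    by (simp add: Bochner_Integration.integral_sum Xc_prod_int integrable_sum)
  also have "\<dots> \<le> (\<Sum>p\<in>?P. \<Sum>q\<in>?P. B\<^sup>2 * ?w p q)"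
  proof (intro sum_mono)
    fix p q
    show "expectation (\<lambda>\<omega>. Xc a c p \<omega> * Xc a c q \<omega>) \<le> B\<^sup>2 * ?w p q"
    proof (cases "{fst p, snd p} \<inter> {fst q, snd q} = {}")
      case True
      then show ?thesis by (simp add: Xc_disjoint)
    next
      case False
      then have w1: "?w p q \<ge> 1" by auto
      have "\<bar>c 0\<bar> \<le> B" by (rule cB)
      then have B0: "0 \<le> B" by linarith
      have "expectation (\<lambda>\<omega>. Xc a c p \<omega> * Xc a c q \<omega>) \<le> expectation (\<lambda>\<omega>. B\<^sup>2)"
      proof (rule integral_mono[OF Xc_prod_int])
        fix \<omega>
        have "\<bar>Xc a c p \<omega> * Xc a c q \<omega>\<bar> \<le> \<bar>c (fst p)\<bar> * \<bar>c (fst q)\<bar>" by (rule Xc_prod_abs)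
        also have "\<dots> \<le> B * B" using cB B0 by (intro mult_mono) auto
        finally show "Xc a c p \<omega> * Xc a c q \<omega> \<le> B\<^sup>2" by (simp add: power2_eq_square)
      qed simp
      also have "\<dots> = B\<^sup>2" by (simp add: prob_space)
      also have "\<dots> \<le> B\<^sup>2 * ?w p q" using w1 by (simp add: mult_le_cancel_left1)
      finally show ?thesis .
    qed
  qed
  also have "\<dots> = (\<Sum>p\<in>?P. B\<^sup>2 * (4 * real n))"
  proof (rule sum.cong[OF refl])
    fix p assume "p \<in> ?P"
    then show "(\<Sum>q\<in>?P. B\<^sup>2 * ?w p q) = B\<^sup>2 * (4 * real n)"
      using w_sum[of "fst p" n "snd p"] by (auto simp: sum_distrib_left[symmetric])
  qed
  also have "\<dots> = 4 * real n ^ 3 * B\<^sup>2" by (simp add: power3_eq_cube power2_eq_square)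
  finally show ?thesis .
qed

lemma ES_eq: "expectation (Ssum a c n) = ES a c n"
  unfolding Ssum_def ES_def pI_def
  by (simp add: Bochner_Integration.integral_sum Ind_int integrable_sum)

lemma chebyshev_S:
  assumes cB: "\<And>i. \<bar>c i\<bar> \<le> B" and t: "t > 0"
  shows "prob {\<omega>\<in>space M. \<bar>Ssum a c n \<omega> - ES a c n\<bar> \<ge> t} \<le> 4 * real n ^ 3 * B\<^sup>2 / t\<^sup>2"
proof -
  have "\<bar>c 0\<bar> \<le> B" by (rule cB)
  then have B0: "0 \<le> B" by linarith
  have "\<bar>Ssum a c n \<omega>\<bar> \<le> (\<Sum>i=1..n. \<Sum>j=1..n. B)" for \<omega>
    unfolding Ssum_def
  proof (rule order_trans[OF sum_abs sum_mono], rule order_trans[OF sum_abs sum_mono])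
    fix i j
    have "\<bar>c i\<bar> * \<bar>Ind a i j \<omega>\<bar> \<le> B * 1" using cB Ind_bounds[of a i j \<omega>] B0
      by (intro mult_mono) auto
    then show "\<bar>c i * Ind a i j \<omega>\<bar> \<le> B" by (simp add: abs_mult)
  qed
  moreover have K0: "0 \<le> (\<Sum>i=1..n. \<Sum>j=1..n. B)" using B0 by (simp add: sum_nonneg)
  ultimately have "norm ((Ssum a c n x)\<^sup>2) \<le> (\<Sum>i=1..n. \<Sum>j=1..n. B)^2" for x
    by (metis abs_le_square_iff abs_of_nonneg real_norm_def zero_le_power2)
  then have int2: "integrable M (\<lambda>x. (Ssum a c n x)\<^sup>2)"
    by (intro integrable_const_bound[where B="(\<Sum>i=1..n. \<Sum>j=1..n. B)^2"]) auto
  have "prob {\<omega>\<in>space M. \<bar>Ssum a c n \<omega> - expectation (Ssum a c n)\<bar> \<ge> t} \<le> variance (Ssum a c n) / t\<^sup>2"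
    by (rule Chebyshev_inequality[OF _ int2 t]) simp
  also have "\<dots> \<le> 4 * real n ^ 3 * B\<^sup>2 / t\<^sup>2"
    using var_bound[OF cB, where a=a and n=n] by (simp add: ES_eq divide_right_mono)
  finally show ?thesis by (simp add: ES_eq)
qed

end


locale full = setting M \<phi> Z for M :: "'a measure" and \<phi> Z +
  fixes f :: "real \<Rightarrow> real" and L :: real and \<theta>s :: real
  assumes lip: "L-lipschitz_on UNIV f"
    and fper: "\<forall>x. f (x + 1) = f x"
begin

lemma L_nonneg: "0 \<le> L" using lipschitz_on_nonneg[OF lip] .

lemma f_lip: "\<bar>f x - f y\<bar> \<le> L * \<bar>x - y\<bar>"
  using lipschitz_onD[OF lip, of x y] by (simp add: dist_real_def)

lemma f_cont: "continuous_on S f"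
  using lipschitz_on_continuous_on[OF lip] continuous_on_subset by blast

lemma f_per_int: "f (x + real_of_int k) = f x"
  using per_int[OF fper] .

lemma f_per_int': "f (x - real_of_int k) = f x"
  using per_int[OF fper, of x "-k"] by simp

lemma f_bounded: "\<exists>B. \<forall>x. \<bar>f x\<bar> \<le> B"
proof -
  have "compact (f ` {0..1})" by (rule compact_continuous_image[OF f_cont]) simp
  then obtain B where B: "\<forall>y\<in>f ` {0..1}. norm y \<le> B"
    using compact_imp_bounded bounded_iff by metis
  have "\<bar>f x\<bar> \<le> B" for x
  proof -
    have "f x = f (x - real_of_int \<lfloor>x\<rfloor>)" by (rule f_per_int'[symmetric])
    moreover have "x - real_of_int \<lfloor>x\<rfloor> \<in> {0..1}" by auto linarith
    ultimately show ?thesis using B by auto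
  qed
  then show ?thesis by blast
qed

definition Bf where "Bf = (SOME B. \<forall>x. \<bar>f x\<bar> \<le> B)"

lemma Bf: "\<bar>f x\<bar> \<le> Bf"
  using someI_ex[OF f_bounded] unfolding Bf_def by blast

definition Mf where "Mf \<theta> = Mfun f \<phi> \<theta>s \<theta>"

definition Gt where "Gt \<theta> u v = Phi2 \<phi> (f u - f v) * f (u + \<theta>s - \<theta>)"

lemma Gt_cont: "continuous_on UNIV (\<lambda>p. Gt \<theta> (fst p) (snd p))"
proof -
  have c1: "continuous_on UNIV (\<lambda>p::real\<times>real. f (fst p) - f (snd p))"
    by (intro continuous_intros continuous_on_compose2[OF f_cont[of UNIV]]) auto
  have c2: "continuous_on UNIV (\<lambda>p::real\<times>real. Phi2 \<phi> (f (fst p) - f (snd p)))"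
    by (rule continuous_on_compose2[OF Phi2_cont c1]) auto
  have c3: "continuous_on UNIV (\<lambda>p::real\<times>real. f (fst p + \<theta>s - \<theta>))"
    by (intro continuous_on_compose2[OF f_cont[of UNIV]] continuous_intros) auto
  show ?thesis unfolding Gt_def by (intro continuous_intros c2 c3)
qed

lemma Gt_per1: "\<forall>u v. Gt \<theta> (u+1) v = Gt \<theta> u v"
proof (intro allI)
  fix u v
  have "f (u + 1 + \<theta>s - \<theta>) = f ((u + \<theta>s - \<theta>) + 1)" by (simp add: algebra_simps)
  then show "Gt \<theta> (u+1) v = Gt \<theta> u v" unfolding Gt_def using fper by simp
qed

lemma Gt_per2: "\<forall>u v. Gt \<theta> u (v+1) = Gt \<theta> u v"
  unfolding Gt_def using fper by simp

lemma Gt_bound: "\<bar>Gt \<theta> u v\<bar> \<le> Bf"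
proof -
  have "\<bar>Phi2 \<phi> (f u - f v)\<bar> \<le> 1" using Phi2_bounds by auto
  then have "\<bar>Phi2 \<phi> (f u - f v)\<bar> * \<bar>f (u + \<theta>s - \<theta>)\<bar> \<le> 1 * Bf"
    using Bf by (intro mult_mono) auto
  then show ?thesis by (simp add: Gt_def abs_mult)
qed

lemma set_int_cont: "continuous_on UNIV g \<Longrightarrow> set_integrable lborel {a..b::real} (g :: real \<Rightarrow> real)"
  unfolding set_integrable_def
  by (rule borel_integrable_compact) (auto intro: continuous_on_subset)

lemma Mf_eq: "Mf \<theta> = integral {0..1} (\<lambda>u. integral {0..1} (Gt \<theta> u))"
proof -
  have inner: "(LBINT x=0..1. Phi2 \<phi> (f u - f x) * f (u + \<theta>s - \<theta>)) = integral {0..1} (Gt \<theta> u)" for u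
  proof -
    have "set_integrable lborel {0..1::real} (Gt \<theta> u)"
      by (auto intro!: set_int_cont cont_slice[OF Gt_cont])
    then have "(LBINT x=0..1. Gt \<theta> u x) = integral {0..1} (Gt \<theta> u)"
      using interval_integral_eq_integral[of 0 1 "Gt \<theta> u"] by (simp add: zero_ereal_def one_ereal_def)
    then show ?thesis by (simp add: Gt_def)
  qed
  have "Mf \<theta> = (LBINT u=0..1. integral {0..1} (Gt \<theta> u))"
    unfolding Mf_def Mfun_def inner ..
  also have "\<dots> = integral {0..1} (\<lambda>u. integral {0..1} (Gt \<theta> u))"
  proof -
    have "set_integrable lborel {0..1::real} (\<lambda>u. integral {0..1} (Gt \<theta> u))"
      by (auto intro!: set_int_cont cont_param[OF Gt_cont])
    then show ?thesis
      using interval_integral_eq_integral[of 0 1 "\<lambda>u. integral {0..1} (Gt \<theta> u)"]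
      by (simp add: zero_ereal_def one_ereal_def)
  qed
  finally show ?thesis .
qed

lemma Mf_lip: "\<bar>Mf \<theta>1 - Mf \<theta>2\<bar> \<le> L * \<bar>\<theta>1 - \<theta>2\<bar>"
proof -
  have ptw: "\<bar>Gt \<theta>1 u v - Gt \<theta>2 u v\<bar> \<le> L * \<bar>\<theta>1 - \<theta>2\<bar>" for u v
  proof -
    have "\<bar>Gt \<theta>1 u v - Gt \<theta>2 u v\<bar> = \<bar>Phi2 \<phi> (f u - f v)\<bar> * \<bar>f (u + \<theta>s - \<theta>1) - f (u + \<theta>s - \<theta>2)\<bar>"
      unfolding Gt_def by (simp add: abs_mult[symmetric] right_diff_distrib)
    also have "\<dots> \<le> 1 * (L * \<bar>\<theta>1 - \<theta>2\<bar>)"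
    proof (rule mult_mono)
      show "\<bar>Phi2 \<phi> (f u - f v)\<bar> \<le> 1" using Phi2_bounds by auto
      have "\<bar>f (u + \<theta>s - \<theta>1) - f (u + \<theta>s - \<theta>2)\<bar> \<le> L * \<bar>(u + \<theta>s - \<theta>1) - (u + \<theta>s - \<theta>2)\<bar>" by (rule f_lip)
      then show "\<bar>f (u + \<theta>s - \<theta>1) - f (u + \<theta>s - \<theta>2)\<bar> \<le> L * \<bar>\<theta>1 - \<theta>2\<bar>"
        by (simp add: abs_minus_commute)
    qed auto
    finally show ?thesis by simp
  qed
  have inner: "\<bar>integral {0..1} (Gt \<theta>1 u) - integral {0..1} (Gt \<theta>2 u)\<bar> \<le> L * \<bar>\<theta>1 - \<theta>2\<bar>" for u
  proof -
    have "integral {0..1} (\<lambda>v. Gt \<theta>1 u v - Gt \<theta>2 u v) = integral {0..1} (Gt \<theta>1 u) - integral {0..1} (Gt \<theta>2 u)"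
      by (rule integral_diff) (auto intro!: integrable_continuous_interval cont_slice[OF Gt_cont])
    moreover have "norm (integral {0..1} (\<lambda>v. Gt \<theta>1 u v - Gt \<theta>2 u v)) \<le> L * \<bar>\<theta>1 - \<theta>2\<bar> * (1 - 0)"
      by (rule integral_bound) (auto intro!: continuous_intros cont_slice[OF Gt_cont] ptw)
    ultimately show ?thesis by simp
  qed
  have "integral {0..1} (\<lambda>u. integral {0..1} (Gt \<theta>1 u) - integral {0..1} (Gt \<theta>2 u))
       = integral {0..1} (\<lambda>u. integral {0..1} (Gt \<theta>1 u)) - integral {0..1} (\<lambda>u. integral {0..1} (Gt \<theta>2 u))"
    by (rule integral_diff) (auto intro!: integrable_continuous_interval cont_param[OF Gt_cont])
  moreover have "norm (integral {0..1} (\<lambda>u. integral {0..1} (Gt \<theta>1 u) - integral {0..1} (Gt \<theta>2 u))) \<le> L * \<bar>\<theta>1 - \<theta>2\<bar> * (1 - 0)"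
    by (rule integral_bound) (auto intro!: continuous_intros cont_param[OF Gt_cont] inner)
  ultimately show ?thesis unfolding Mf_eq by simp
qed

lemma Mf_per: "Mf (\<theta> + real_of_int k) = Mf \<theta>"
proof -
  have "f (x0 + \<theta>s - (\<theta> + real_of_int k)) = f (x0 + \<theta>s - \<theta>)" for x0
    using f_per_int'[of "x0 + \<theta>s - \<theta>" k] by (simp add: algebra_simps)
  then show ?thesis unfolding Mf_def Mfun_def by simp
qed

lemma Mf_cont: "continuous_on S Mf"
proof -
  have "(L + 1)-lipschitz_on UNIV Mf"
  proof (rule lipschitz_onI)
    fix x y :: real
    have "\<bar>Mf x - Mf y\<bar> \<le> L * \<bar>x - y\<bar>" by (rule Mf_lip)
    also have "\<dots> \<le> (L + 1) * \<bar>x - y\<bar>" by (intro mult_right_mono) auto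
    finally show "dist (Mf x) (Mf y) \<le> (L + 1) * dist x y" by (simp add: dist_real_def)
  qed (use L_nonneg in auto)
  then show ?thesis using lipschitz_on_continuous_on continuous_on_subset by blast
qed

end


context full begin

lemma gap:
  assumes uniq: "\<forall>\<theta>. \<theta> - \<theta>s \<notin> \<int> \<longrightarrow> Mf \<theta> < Mf \<theta>s" and e: "0 < \<epsilon>" "\<epsilon> < 1/2"
  shows "\<exists>\<delta>>0. \<forall>\<theta>. (\<forall>k::int. \<epsilon> \<le> \<bar>\<theta> - \<theta>s - of_int k\<bar>) \<longrightarrow> Mf \<theta> \<le> Mf \<theta>s - \<delta>"
proof -
  define K where "K = {\<theta>s-1/2..\<theta>s-\<epsilon>} \<union> {\<theta>s+\<epsilon>..\<theta>s+1/2}"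
  have cK: "compact K" unfolding K_def by (intro compact_Un compact_Icc)
  have neK: "K \<noteq> {}" unfolding K_def using e by auto
  obtain \<theta>0 where th0: "\<theta>0 \<in> K" "\<forall>y\<in>K. Mf y \<le> Mf \<theta>0"
    using continuous_attains_sup[OF cK neK Mf_cont] by blast
  have "\<theta>0 - \<theta>s \<notin> \<int>"
  proof
    assume "\<theta>0 - \<theta>s \<in> \<int>"
    then obtain m where m: "\<theta>0 - \<theta>s = of_int m" by (auto elim: Ints_cases)
    have r: "\<epsilon> \<le> \<bar>\<theta>0 - \<theta>s\<bar>" "\<bar>\<theta>0 - \<theta>s\<bar> \<le> 1/2" using th0(1) e unfolding K_def by (auto simp: abs_if)
    then have "real_of_int \<bar>m\<bar> < 1" using m by simp
    then have "m = 0" by linarith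
    then show False using r m e by simp
  qed
  then have lt: "Mf \<theta>0 < Mf \<theta>s" using uniq by blast
  define \<delta> where "\<delta> = Mf \<theta>s - Mf \<theta>0"
  have "\<delta> > 0" using lt by (simp add: \<delta>_def)
  moreover have "Mf \<theta> \<le> Mf \<theta>s - \<delta>" if h: "\<forall>k::int. \<epsilon> \<le> \<bar>\<theta> - \<theta>s - of_int k\<bar>" for \<theta>
  proof -
    define k where "k = \<lfloor>\<theta> - \<theta>s + 1/2\<rfloor>"
    define t where "t = \<theta> - \<theta>s - of_int k"
    have t1: "-1/2 \<le> t" "t < 1/2" unfolding t_def k_def by linarith+
    have t2: "\<epsilon> \<le> \<bar>t\<bar>" unfolding t_def using h by blast
    have "\<theta>s + t \<in> K" unfolding K_def using t1 t2 by (cases "t \<ge> 0") auto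
    then have "Mf (\<theta>s + t) \<le> Mf \<theta>0" using th0 by blast
    moreover have "Mf \<theta> = Mf (\<theta>s + t)" using Mf_per[of "\<theta>s + t" k] by (simp add: t_def)
    ultimately show ?thesis by (simp add: \<delta>_def)
  qed
  ultimately show ?thesis by blast
qed

lemma card_filter_real: "real (card {j::nat\<in>{1..n}. P j}) = (\<Sum>j=1..n. if P j then 1 else 0)"
proof -
  have "real (card {j\<in>{1..n}. P j}) = (\<Sum>j\<in>{j\<in>{1..n}. P j}. 1)" by (rule real_of_card)
  also have "\<dots> = (\<Sum>j=1..n. if P j then 1 else 0)" by (rule sum.inter_filter) simp
  finally show ?thesis .
qed

definition aY where "aY n i = f (real i / real n - \<theta>s)"
definition cW where "cW n \<theta> i = f (real i / real n - \<theta>)"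

lemma Mhat_eq:
  "Mhat f (\<lambda>i. f (real i / real n - \<theta>s) + Z i \<omega>) n \<theta> = Ssum (aY n) (cW n \<theta>) n \<omega> / (real n)\<^sup>2"
proof -
  have r: "real (rank (\<lambda>i. f (real i / real n - \<theta>s) + Z i \<omega>) n i) = (\<Sum>j=1..n. Ind (aY n) i j \<omega>)" for i
    unfolding rank_def card_filter_real Ind_def aY_def ..
  let ?r = "\<lambda>i. (\<Sum>j=1..n. Ind (aY n) i j \<omega>)"
  have S: "Ssum (aY n) (cW n \<theta>) n \<omega> = (\<Sum>i=1..n. cW n \<theta> i * ?r i)"
    unfolding Ssum_def by (simp only: sum_distrib_left)
  have "Mhat f (\<lambda>i. f (real i / real n - \<theta>s) + Z i \<omega>) n \<theta>
        = 1 / real n * (\<Sum>i=1..n. (cW n \<theta> i * ?r i) / real n)"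
    unfolding Mhat_def r cW_def by (intro arg_cong[where f="\<lambda>x. 1 / real n * x"] sum.cong) auto
  also have "\<dots> = (\<Sum>i=1..n. cW n \<theta> i * ?r i) / (real n)\<^sup>2"
    by (simp only: sum_divide_distrib[symmetric] power2_eq_square) simp
  finally show ?thesis unfolding S .
qed

lemma rank_le: "rank Y n i \<le> n"
proof -
  have "rank Y n i \<le> card {1..n}" unfolding rank_def by (rule card_mono) auto
  then show ?thesis by simp
qed

lemma Mhat_lip:
  assumes n: "n \<ge> 1"
  shows "\<bar>Mhat f Y n \<theta>1 - Mhat f Y n \<theta>2\<bar> \<le> L * \<bar>\<theta>1 - \<theta>2\<bar>"
proof -
  have "Mhat f Y n \<theta>1 - Mhat f Y n \<theta>2
       = (1 / real n) * ((\<Sum>i=1..n. (real (rank Y n i) / real n) * f (real i / real n - \<theta>1))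
                       - (\<Sum>i=1..n. (real (rank Y n i) / real n) * f (real i / real n - \<theta>2)))"
    unfolding Mhat_def by (rule right_diff_distrib[symmetric])
  also have "(\<Sum>i=1..n. (real (rank Y n i) / real n) * f (real i / real n - \<theta>1))
                       - (\<Sum>i=1..n. (real (rank Y n i) / real n) * f (real i / real n - \<theta>2))
           = (\<Sum>i=1..n. (real (rank Y n i) / real n) * (f (real i / real n - \<theta>1) - f (real i / real n - \<theta>2)))"
    by (simp only: sum_subtractf[symmetric] right_diff_distrib)
  finally have "\<bar>Mhat f Y n \<theta>1 - Mhat f Y n \<theta>2\<bar>
       = \<bar>(\<Sum>i=1..n. (real (rank Y n i) / real n) * (f (real i / real n - \<theta>1) - f (real i / real n - \<theta>2)))\<bar> / n"
    by (simp add: abs_mult)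
  also have "\<dots> \<le> (\<Sum>i=1..n. L * \<bar>\<theta>1 - \<theta>2\<bar>) / n"
  proof (rule divide_right_mono[OF order_trans[OF sum_abs sum_mono]])
    fix i
    have r: "0 \<le> real (rank Y n i) / real n" "real (rank Y n i) / real n \<le> 1"
      using rank_le[of Y n i] n by auto
    have "\<bar>f (real i / real n - \<theta>1) - f (real i / real n - \<theta>2)\<bar> \<le> L * \<bar>\<theta>1 - \<theta>2\<bar>"
      using f_lip[of "real i / real n - \<theta>1" "real i / real n - \<theta>2"] by (simp add: abs_minus_commute)
    then have "\<bar>real (rank Y n i) / real n\<bar> * \<bar>f (real i / real n - \<theta>1) - f (real i / real n - \<theta>2)\<bar> \<le> 1 * (L * \<bar>\<theta>1 - \<theta>2\<bar>)"
      using r by (intro mult_mono) simp_all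
    then show "\<bar>real (rank Y n i) / real n * (f (real i / real n - \<theta>1) - f (real i / real n - \<theta>2))\<bar> \<le> L * \<bar>\<theta>1 - \<theta>2\<bar>"
      by (simp add: abs_mult)
  qed simp
  also have "\<dots> = L * \<bar>\<theta>1 - \<theta>2\<bar>" using n by simp
  finally show ?thesis .
qed

lemma Mhat_per: "Mhat f Y n (\<theta> + real_of_int k) = Mhat f Y n \<theta>"
proof -
  have "f (x - (\<theta> + real_of_int k)) = f (x - \<theta>)" for x
    using f_per_int'[of "x - \<theta>" k] by (simp add: algebra_simps)
  then show ?thesis unfolding Mhat_def by simp
qed

lemma pI_decomp: "pI a i j = Phi2 \<phi> (a i - a j) + (if i = j then 1 - Phi2 \<phi> 0 else 0)"
  by (cases "i = j") (auto simp: pI_diag pI_offdiag)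

lemma ES_lim: "(\<lambda>n. ES (aY n) (cW n \<theta>) n / (real n)\<^sup>2) \<longlonglongrightarrow> Mf \<theta>"
proof -
  let ?main = "\<lambda>n::nat. (\<Sum>i=1..n. \<Sum>j=1..n. Gt \<theta> (- \<theta>s + real i / n) (- \<theta>s + real j / n)) / (real n)\<^sup>2"
  let ?rem = "\<lambda>n::nat. (\<Sum>i=1..n. cW n \<theta> i * (1 - Phi2 \<phi> 0)) / (real n)\<^sup>2"
  have split: "ES (aY n) (cW n \<theta>) n / (real n)\<^sup>2 = ?main n + ?rem n" for n
  proof -
    have "ES (aY n) (cW n \<theta>) n = (\<Sum>i=1..n. \<Sum>j=1..n. cW n \<theta> i * Phi2 \<phi> (aY n i - aY n j))
          + (\<Sum>i=1..n. \<Sum>j=1..n. if i = j then cW n \<theta> i * (1 - Phi2 \<phi> 0) else 0)"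
    proof -
      have pt: "cW n \<theta> i * pI (aY n) i j = cW n \<theta> i * Phi2 \<phi> (aY n i - aY n j)
                 + (if i = j then cW n \<theta> i * (1 - Phi2 \<phi> 0) else 0)" for i j
        by (simp add: pI_decomp distrib_left)
      show ?thesis unfolding ES_def pt by (simp only: sum.distrib)
    qed
    also have "(\<Sum>i=1..n. \<Sum>j=1..n. if i = j then cW n \<theta> i * (1 - Phi2 \<phi> 0) else 0)
             = (\<Sum>i=1..n. cW n \<theta> i * (1 - Phi2 \<phi> 0))"
      by (rule sum.cong[OF refl]) (simp add: sum.delta)
    also have "(\<Sum>i=1..n. \<Sum>j=1..n. cW n \<theta> i * Phi2 \<phi> (aY n i - aY n j))
             = (\<Sum>i=1..n. \<Sum>j=1..n. Gt \<theta> (- \<theta>s + real i / n) (- \<theta>s + real j / n))"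
    proof -
      have g: "Gt \<theta> (- \<theta>s + x) (- \<theta>s + y) = f (x - \<theta>) * Phi2 \<phi> (f (x - \<theta>s) - f (y - \<theta>s))" for x y
      proof -
        have args: "- \<theta>s + x = x - \<theta>s" "- \<theta>s + y = y - \<theta>s" "x - \<theta>s + \<theta>s - \<theta> = x - \<theta>" by simp_all
        show ?thesis unfolding Gt_def args by (rule mult.commute)
      qed
      show ?thesis unfolding g cW_def aY_def ..
    qed
    finally show ?thesis by (simp only: add_divide_distrib)
  qed
  have main: "?main \<longlonglongrightarrow> integral {0..1} (\<lambda>u. integral {0..1} (Gt \<theta> u))"
    by (rule riemann_2d[OF Gt_cont Gt_per1 Gt_per2])
  have rem: "?rem \<longlonglongrightarrow> 0"
  proof (rule Lim_null_comparison)
    show "\<forall>\<^sub>F n in sequentially. norm (?rem n) \<le> (2 * Bf) * inverse (real n)"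
    proof (rule eventually_sequentiallyI[of 1])
      fix n :: nat assume n: "n \<ge> 1"
      have "\<bar>\<Sum>i=1..n. cW n \<theta> i * (1 - Phi2 \<phi> 0)\<bar> \<le> (\<Sum>i=1..n. 2 * Bf)"
      proof (rule order_trans[OF sum_abs sum_mono])
        fix i
        have "\<bar>cW n \<theta> i\<bar> * \<bar>1 - Phi2 \<phi> 0\<bar> \<le> Bf * 2"
          using Bf[of "real i / real n - \<theta>"] Phi2_bounds[of 0] unfolding cW_def
          by (intro mult_mono) auto
        then show "\<bar>cW n \<theta> i * (1 - Phi2 \<phi> 0)\<bar> \<le> 2 * Bf" by (simp add: abs_mult)
      qed
      then have "\<bar>\<Sum>i=1..n. cW n \<theta> i * (1 - Phi2 \<phi> 0)\<bar> / (real n)\<^sup>2 \<le> real n * (2 * Bf) / (real n)\<^sup>2"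
        by (simp add: divide_right_mono)
      also have "\<dots> = (2 * Bf) * inverse (real n)" using n by (simp add: power2_eq_square field_simps)
      finally show "norm (?rem n) \<le> (2 * Bf) * inverse (real n)" by simp
    qed
    show "(\<lambda>n. (2 * Bf) * inverse (real n)) \<longlonglongrightarrow> 0"
      by (rule tendsto_mult_right_zero[OF lim_inverse_n])
  qed
  have "(\<lambda>n. ?main n + ?rem n) \<longlonglongrightarrow> integral {0..1} (\<lambda>u. integral {0..1} (Gt \<theta> u)) + 0"
    by (rule tendsto_add[OF main rem])
  then show ?thesis unfolding split Mf_eq by simp
qed

end


lemma dist_mod1_le: "dist_mod1 a b \<le> \<bar>a - b - of_int k\<bar>"
  unfolding dist_mod1_def by (rule cINF_lower) (auto intro: bdd_belowI2[where m=0])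

context full begin

definition Ev where "Ev \<eta> g n = {\<omega>\<in>space M. \<eta> \<le> \<bar>Ssum (aY n) (cW n g) n \<omega> / (real n)\<^sup>2 - Mf g\<bar>}"

lemma Ev_sets: "Ev \<eta> g n \<in> sets M"
  unfolding Ev_def by measurable

lemma Ev_lim:
  assumes eta: "\<eta> > 0"
  shows "(\<lambda>n. prob (Ev \<eta> g n)) \<longlonglongrightarrow> 0"
proof (rule Lim_null_comparison)
  let ?C = "16 * Bf\<^sup>2 / \<eta>\<^sup>2"
  have ev1: "\<forall>\<^sub>F n in sequentially. dist (ES (aY n) (cW n g) n / (real n)\<^sup>2) (Mf g) < \<eta> / 2"
  proof -
    have "\<eta> / 2 > 0" using eta by simp
    then show ?thesis using ES_lim[of g] unfolding tendsto_iff by blast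
  qed
  have ev2: "\<forall>\<^sub>F n in sequentially. n \<ge> 1" by (rule eventually_ge_at_top)
  show "\<forall>\<^sub>F n in sequentially. norm (prob (Ev \<eta> g n)) \<le> ?C * inverse (real n)"
    using ev1 ev2
  proof eventually_elim
    case (elim n)
    have n: "real n > 0" using elim(2) by simp
    let ?S = "Ssum (aY n) (cW n g) n" and ?E = "ES (aY n) (cW n g) n"
    let ?B = "{\<omega>\<in>space M. \<eta> / 2 * (real n)\<^sup>2 \<le> \<bar>?S \<omega> - ?E\<bar>}"
    have sub: "Ev \<eta> g n \<subseteq> ?B"
    proof
      fix \<omega> assume "\<omega> \<in> Ev \<eta> g n"
      then have w: "\<omega> \<in> space M" "\<eta> \<le> \<bar>?S \<omega> / (real n)\<^sup>2 - Mf g\<bar>" unfolding Ev_def by auto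
      have d: "\<bar>?E / (real n)\<^sup>2 - Mf g\<bar> < \<eta> / 2" using elim(1) by (simp add: dist_real_def)
      have "\<eta> / 2 \<le> \<bar>?S \<omega> / (real n)\<^sup>2 - ?E / (real n)\<^sup>2\<bar>" using w(2) d by linarith
      also have "\<dots> = \<bar>?S \<omega> - ?E\<bar> / (real n)\<^sup>2" by (simp add: diff_divide_distrib[symmetric])
      finally have "\<eta> / 2 * (real n)\<^sup>2 \<le> \<bar>?S \<omega> - ?E\<bar>" using n by (simp add: pos_le_divide_eq)
      then show "\<omega> \<in> ?B" using w(1) by simp
    qed
    have "prob (Ev \<eta> g n) \<le> prob ?B"
      by (rule finite_measure_mono[OF sub]) measurable
    also have "\<dots> \<le> 4 * real n ^ 3 * Bf\<^sup>2 / (\<eta> / 2 * (real n)\<^sup>2)\<^sup>2"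
    proof -
      have "?B = {\<omega>\<in>space M. \<bar>?S \<omega> - ?E\<bar> \<ge> \<eta> / 2 * (real n)\<^sup>2}" by simp
      moreover have "prob {\<omega>\<in>space M. \<bar>?S \<omega> - ?E\<bar> \<ge> \<eta> / 2 * (real n)\<^sup>2} \<le> 4 * real n ^ 3 * Bf\<^sup>2 / (\<eta> / 2 * (real n)\<^sup>2)\<^sup>2"
        by (rule chebyshev_S) (use eta n in \<open>auto simp: cW_def Bf\<close>)
      ultimately show ?thesis by simp
    qed
    also have "\<dots> = ?C * inverse (real n)"
      using n eta by (simp add: field_simps power2_eq_square power3_eq_cube)
    finally show ?case by simp
  qed
  show "(\<lambda>n. ?C * inverse (real n)) \<longlonglongrightarrow> 0"
    by (rule tendsto_mult_right_zero[OF lim_inverse_n])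
qed

end


context full begin

lemma main:
  fixes \<theta>hat :: "nat \<Rightarrow> 'a \<Rightarrow> real"
  assumes uniq: "\<forall>\<theta>. \<theta> - \<theta>s \<notin> \<int> \<longrightarrow> Mfun f \<phi> \<theta>s \<theta> < Mfun f \<phi> \<theta>s \<theta>s"
    and amax: "\<forall>n\<ge>1. \<forall>\<omega>\<in>space M. \<forall>\<theta>.
           Mhat f (\<lambda>i. f (real i / real n - \<theta>s) + Z i \<omega>) n \<theta>
             \<le> Mhat f (\<lambda>i. f (real i / real n - \<theta>s) + Z i \<omega>) n (\<theta>hat n \<omega>)"
    and e: "\<epsilon> > 0"
  shows "\<exists>A :: nat \<Rightarrow> 'a set.
           (\<forall>n. A n \<in> sets M \<and> {\<omega> \<in> space M. dist_mod1 (\<theta>hat n \<omega>) \<theta>s > \<epsilon>} \<subseteq> A n)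
           \<and> (\<lambda>n. measure M (A n)) \<longlonglongrightarrow> 0"
proof -
  define \<epsilon>' where "\<epsilon>' = min \<epsilon> (1/4)"
  have e': "0 < \<epsilon>'" "\<epsilon>' < 1/2" "\<epsilon>' \<le> \<epsilon>" using e unfolding \<epsilon>'_def by auto
  have uniq': "\<forall>\<theta>. \<theta> - \<theta>s \<notin> \<int> \<longrightarrow> Mf \<theta> < Mf \<theta>s" using uniq unfolding Mf_def .
  obtain \<delta> where \<delta>: "\<delta> > 0"
    and gap\<delta>: "\<And>\<theta>. (\<forall>k::int. \<epsilon>' \<le> \<bar>\<theta> - \<theta>s - of_int k\<bar>) \<Longrightarrow> Mf \<theta> \<le> Mf \<theta>s - \<delta>"
    using gap[OF uniq' e'(1,2)] by blast
  define h where "h = \<delta> / (8 * (L + 1))"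
  have L0: "0 \<le> L" by (rule L_nonneg)
  have h0: "h > 0" unfolding h_def using \<delta> L0 by simp
  have hL: "L * h \<le> \<delta> / 8"
  proof -
    have "L * h \<le> (L + 1) * h" using h0 by simp
    also have "\<dots> = \<delta> / 8" unfolding h_def using L0 by (simp add: field_simps)
    finally show ?thesis .
  qed
  define N where "N = nat \<lceil>1/h\<rceil>"
  define Gr where "Gr = (\<lambda>m. \<theta>s - 1/2 + real m * h) ` {0..N} \<union> {\<theta>s}"
  have finGr: "finite Gr" unfolding Gr_def by simp
  define \<eta> where "\<eta> = \<delta> / 4"
  have \<eta>: "\<eta> > 0" unfolding \<eta>_def using \<delta> by simp
  define A where "A n = (if n = 0 then space M else \<Union>g\<in>Gr. Ev \<eta> g n)" for n
  have Asets: "A n \<in> sets M" for n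
    unfolding A_def using finGr Ev_sets by auto
  have Acont: "{\<omega> \<in> space M. dist_mod1 (\<theta>hat n \<omega>) \<theta>s > \<epsilon>} \<subseteq> A n" for n
  proof (cases "n = 0")
    case True then show ?thesis by (auto simp: A_def)
  next
    case False
    then have n1: "n \<ge> 1" by simp
    show ?thesis
    proof
      fix \<omega> assume "\<omega> \<in> {\<omega> \<in> space M. \<epsilon> < dist_mod1 (\<theta>hat n \<omega>) \<theta>s}"
      then have w: "\<omega> \<in> space M" "\<epsilon> < dist_mod1 (\<theta>hat n \<omega>) \<theta>s" by auto
      define Y where "Y = (\<lambda>i. f (real i / real n - \<theta>s) + Z i \<omega>)"
      define th where "th = \<theta>hat n \<omega>"
      have hk: "\<forall>k::int. \<epsilon>' \<le> \<bar>th - \<theta>s - of_int k\<bar>"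
      proof
        fix k :: int
        show "\<epsilon>' \<le> \<bar>th - \<theta>s - of_int k\<bar>"
          using dist_mod1_le[of th \<theta>s k] w(2) e'(3) unfolding th_def by linarith
      qed
      have Mfth: "Mf th \<le> Mf \<theta>s - \<delta>" by (rule gap\<delta>[OF hk])
      define k0 where "k0 = \<lfloor>th - \<theta>s + 1/2\<rfloor>"
      define t where "t = th - \<theta>s - of_int k0"
      have t1: "-1/2 \<le> t" "t < 1/2" unfolding t_def k0_def by linarith+
      define m where "m = nat \<lfloor>(t + 1/2)/h\<rfloor>"
      have nonneg: "0 \<le> (t + 1/2)/h" using t1 h0 by simp
      have mfl: "real m = of_int \<lfloor>(t + 1/2)/h\<rfloor>" unfolding m_def using nonneg by simp
      have m1: "real m \<le> (t + 1/2)/h" "(t + 1/2)/h < real m + 1" unfolding mfl by linarith+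
      have m2: "real m * h \<le> t + 1/2" "t + 1/2 < real m * h + h"
        using m1 h0 by (simp_all add: pos_le_divide_eq pos_divide_less_eq algebra_simps)
      have mN: "m \<le> N"
      proof -
        have "(t + 1/2)/h < 1/h" using t1 h0 by (simp add: divide_strict_right_mono)
        then have "real m < 1/h" using m1 by linarith
        also have "1/h \<le> real N" unfolding N_def by linarith
        finally show ?thesis by simp
      qed
      define g where "g = \<theta>s - 1/2 + real m * h"
      have gGr: "g \<in> Gr" unfolding Gr_def g_def using mN by auto
      have sGr: "\<theta>s \<in> Gr" unfolding Gr_def by auto
      have gd: "\<bar>(\<theta>s + t) - g\<bar> \<le> h" using m2 unfolding g_def by auto
      have thk: "th = (\<theta>s + t) + of_int k0" unfolding t_def by simp
      have per1: "Mhat f Y n th = Mhat f Y n (\<theta>s + t)" unfolding thk by (rule Mhat_per)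
      have per2: "Mf th = Mf (\<theta>s + t)" unfolding thk by (rule Mf_per)
      have am: "Mhat f Y n \<theta>s \<le> Mhat f Y n th" using amax n1 w(1) unfolding Y_def th_def by blast
      have l1: "\<bar>Mhat f Y n (\<theta>s + t) - Mhat f Y n g\<bar> \<le> L * h"
        using Mhat_lip[OF n1, of Y "\<theta>s + t" g] mult_left_mono[OF gd L0] by linarith
      have l2: "\<bar>Mf (\<theta>s + t) - Mf g\<bar> \<le> L * h"
        using Mf_lip[of "\<theta>s + t" g] mult_left_mono[OF gd L0] by linarith
      show "\<omega> \<in> A n"
      proof (rule ccontr)
        assume "\<omega> \<notin> A n"
        then have "\<omega> \<notin> Ev \<eta> g n" "\<omega> \<notin> Ev \<eta> \<theta>s n" using gGr sGr False by (auto simp: A_def)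
        then have c1: "\<bar>Mhat f Y n g - Mf g\<bar> < \<eta>" "\<bar>Mhat f Y n \<theta>s - Mf \<theta>s\<bar> < \<eta>"
          using w(1) unfolding Ev_def Y_def Mhat_eq by auto
        show False using c1 Mfth per1 per2 am l1 l2 hL \<delta> unfolding \<eta>_def by linarith
      qed
    qed
  qed
  have lim: "(\<lambda>n. measure M (A n)) \<longlonglongrightarrow> 0"
  proof (rule Lim_null_comparison)
    show "\<forall>\<^sub>F n in sequentially. norm (measure M (A n)) \<le> (\<Sum>g\<in>Gr. prob (Ev \<eta> g n))"
      using eventually_ge_at_top[of 1]
    proof eventually_elim
      case (elim n)
      then have "A n = (\<Union>g\<in>Gr. Ev \<eta> g n)" unfolding A_def by simp
      moreover have "measure M (\<Union>g\<in>Gr. Ev \<eta> g n) \<le> (\<Sum>g\<in>Gr. prob (Ev \<eta> g n))"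
        by (rule finite_measure_subadditive_finite[OF finGr]) (auto simp: Ev_sets)
      ultimately show ?case by simp
    qed
    show "(\<lambda>n. \<Sum>g\<in>Gr. prob (Ev \<eta> g n)) \<longlonglongrightarrow> 0"
      by (rule tendsto_null_sum) (rule Ev_lim[OF \<eta>])
  qed
  show ?thesis using Asets Acont lim by blast
qed

end


theorem theorem1:
  fixes M :: "'a measure"
    and f :: "real \<Rightarrow> real" and \<phi> :: "real \<Rightarrow> real"
    and Z :: "nat \<Rightarrow> 'a \<Rightarrow> real"
    and \<theta>s :: real
    and \<theta>hat :: "nat \<Rightarrow> 'a \<Rightarrow> real"
  assumes "prob_space M"
    and "\<exists>L. L-lipschitz_on UNIV f"
    and "\<forall>x. f (x + 1) = f x"
    and "\<forall>\<theta>. \<theta> - \<theta>s \<notin> \<int> \<longrightarrow> emeasure lborel {x. f (x - \<theta>) \<noteq> f (x - \<theta>s)} > 0"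
    and "\<phi> \<in> borel_measurable borel" and "\<forall>z. \<phi> z \<ge> 0" and "\<forall>z. \<phi> (- z) = \<phi> z"
    and "prob_space.indep_vars M (\<lambda>_. borel) Z UNIV"
    and "\<forall>i. distributed M lborel (Z i) (\<lambda>z. ennreal (\<phi> z))"
    and "\<forall>\<theta>. \<theta> - \<theta>s \<notin> \<int> \<longrightarrow> Mfun f \<phi> \<theta>s \<theta> < Mfun f \<phi> \<theta>s \<theta>s"
    and "\<forall>n\<ge>1. \<forall>\<omega>\<in>space M. \<forall>\<theta>.
           Mhat f (\<lambda>i. f (real i / real n - \<theta>s) + Z i \<omega>) n \<theta>
             \<le> Mhat f (\<lambda>i. f (real i / real n - \<theta>s) + Z i \<omega>) n (\<theta>hat n \<omega>)"
  shows "\<forall>\<epsilon>>0. \<exists>A :: nat \<Rightarrow> 'a set.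
           (\<forall>n. A n \<in> sets M \<and> {\<omega> \<in> space M. dist_mod1 (\<theta>hat n \<omega>) \<theta>s > \<epsilon>} \<subseteq> A n)
           \<and> (\<lambda>n. measure M (A n)) \<longlonglongrightarrow> 0"
proof -
  from assms(2) obtain L where lip: "L-lipschitz_on UNIV f" by blast
  have "full M \<phi> Z f L"
    unfolding full_def full_axioms_def setting_def setting_axioms_def using assms lip by auto
  then interpret full M \<phi> Z f L \<theta>s .
  show ?thesis by (intro allI impI) (rule main[OF assms(10) assms(11)])
qed

end
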